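(* Let $d\ge2$ and let $\theta=(\theta_{ij})_{1\le i+j\le d}\in\mathbb{R}^N$ (with $N$ the number of pairs of nonnegative integers $(i,j)$ with $1\le i+j\le d$). Let $p(x;\theta)=\theta_{d0}x^d+\theta_{d-1,1}x^{d-1}+\dots+\theta_{1,d-1}x+\theta_{0d}$ and let $D(\theta)$ be the discriminant of $p(x;\theta)=0$ (as a polynomial in the coefficients). Define $$\Theta'=\{\theta: p(a;\theta)<0\ \forall a\ge0,\ \theta_{0d}<0,\ \theta_{d0}<0\},$$ $$\Theta''=\{\theta:\theta_{d0}<0,\ \theta_{0d}<0\}\setminus\{\theta: D(\theta)=0\},$$ let $\Theta''_i$, $i\in I$, be the connected components of $\Theta''$, and let $I^*=\{i\in I:\Theta''_i\cap\Theta'\neq\emptyset\}$. Then, except for a set of Lebesgue measure zero, $$\Theta'=\bigcup_{i\in I^*}\Theta''_i .$$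
   Context: $\Theta'$ is the parameter space of the proper order-$d$ bivariate exponential-polynomial model with density proportional to $\exp(\sum_{1\le i+j\le d}\theta_{ij}x^iy^j)$ on the positive orthant. *)

theory Defs
  imports "HOL-Analysis.Analysis" "HOL-Probability.Probability" "Subresultants.Resultant_Prelim"
begin

definition idx :: "nat \<Rightarrow> (nat \<times> nat) set" where
  "idx d = {(i,j). 1 \<le> i + j \<and> i + j \<le> d}"

text \<open>The parameter space R^N, realised as extensional functions on idx d,
  with its Euclidean (product) topology and Lebesgue (product) measure.\<close>
definition param_space :: "nat \<Rightarrow> ((nat \<times> nat) \<Rightarrow> real) set" where
  "param_space d = PiE (idx d) (\<lambda>_. UNIV)"

definition param_top :: "nat \<Rightarrow> ((nat \<times> nat) \<Rightarrow> real) topology" where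
  "param_top d = product_topology (\<lambda>_. euclideanreal) (idx d)"

definition param_lebesgue :: "nat \<Rightarrow> ((nat \<times> nat) \<Rightarrow> real) measure" where
  "param_lebesgue d = PiM (idx d) (\<lambda>_. lborel)"

definition ppoly :: "nat \<Rightarrow> ((nat \<times> nat) \<Rightarrow> real) \<Rightarrow> real poly" where
  "ppoly d \<theta> = (\<Sum>k\<le>d. monom (\<theta> (k, d - k)) k)"

definition discriminant :: "real poly \<Rightarrow> real" where
  "discriminant p = (-1) ^ (degree p * (degree p - 1) div 2)
      * resultant p (pderiv p) / lead_coeff p"

definition Theta1 :: "nat \<Rightarrow> ((nat \<times> nat) \<Rightarrow> real) set" where
  "Theta1 d = {\<theta> \<in> param_space d. (\<forall>a::real. a \<ge> 0 \<longrightarrow> poly (ppoly d \<theta>) a < 0)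
                  \<and> \<theta> (0, d) < 0 \<and> \<theta> (d, 0) < 0}"

definition Theta2 :: "nat \<Rightarrow> ((nat \<times> nat) \<Rightarrow> real) set" where
  "Theta2 d = {\<theta> \<in> param_space d. \<theta> (d, 0) < 0 \<and> \<theta> (0, d) < 0}
              - {\<theta>. discriminant (ppoly d \<theta>) = 0}"

end

theory Submission imports Defs "Subresultants.Subresultant_Gcd" "HOL-Computational_Algebra.Field_as_Ring" "HOL-Computational_Algebra.Fundamental_Theorem_Algebra" begin
lemma poly_ppoly: "poly (ppoly d \<theta>) a = (\<Sum>k\<le>d. \<theta> (k, d - k) * a ^ k)"
  unfolding ppoly_def by (simp add: poly_sum poly_monom)

lemma neg_bound:
  fixes f :: "nat \<Rightarrow> real"
  assumes L: "f d < 0" and neg: "\<forall>a\<ge>0. (\<Sum>k\<le>d. f k * a^k) < 0"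
  shows "\<exists>c>0. \<forall>a\<ge>0. (\<Sum>k\<le>d. f k * a^k) \<le> -c*(1+a)^d"
proof -
  define L where "L = f d"
  define M where "M = (\<Sum>k<d. \<bar>f k\<bar>)"
  define R where "R = max 1 (2*M/(-L))"
  have M0: "M \<ge> 0" unfolding M_def by (intro sum_nonneg) auto
  have Lneg: "L < 0" using L L_def by simp
  have R1: "R \<ge> 1" unfolding R_def by simp
  define c1 where "c1 = -L/(2*2^d)"
  have c1: "c1 > 0" unfolding c1_def using Lneg by (simp add: divide_neg_pos)
  have big: "(\<Sum>k\<le>d. f k * a^k) \<le> -c1*(1+a)^d" if a: "a \<ge> R" for a
  proof -
    have a1: "a \<ge> 1" using a R1 by simp
    have aM: "2*M/(-L) \<le> a" using a unfolding R_def by simp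
    hence aM': "M \<le> (-L/2) * a" using Lneg by (simp add: field_simps)
    have split: "{..d} = insert d {..<d}" by auto
    have "(\<Sum>k\<le>d. f k * a^k) = L * a^d + (\<Sum>k<d. f k * a^k)"
      unfolding split L_def by (simp add: sum.insert)
    also have "(\<Sum>k<d. f k * a^k) \<le> (\<Sum>k<d. \<bar>f k\<bar> * a^(d-1))"
    proof (intro sum_mono)
      fix k assume "k \<in> {..<d}"
      hence "a^k \<le> a^(d-1)" using a1 by (intro power_increasing) auto
      hence "\<bar>f k\<bar> * a^k \<le> \<bar>f k\<bar> * a^(d-1)" by (intro mult_left_mono) auto
      moreover have "f k * a^k \<le> \<bar>f k\<bar> * a^k" using a1 by (intro mult_right_mono) auto
      ultimately show "f k * a^k \<le> \<bar>f k\<bar> * a^(d-1)" by linarith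
    qed
    also have "\<dots> = M * a^(d-1)" unfolding M_def by (simp add: sum_distrib_right)
    also have "M * a^(d-1) \<le> (-L/2) * a^d"
    proof (cases d)
      case 0 then show ?thesis using Lneg M_def by simp
    next
      case (Suc m)
      have "M * a^(d-1) \<le> ((-L/2) * a) * a^(d-1)"
        using aM' a1 by (intro mult_right_mono) auto
      also have "\<dots> = (-L/2) * a^d" using Suc by simp
      finally show ?thesis .
    qed
    finally have s: "(\<Sum>k\<le>d. f k * a^k) \<le> (L/2) * a^d" by simp
    have "(1+a)^d \<le> (2*a)^d" using a1 by (intro power_mono) auto
    hence "(1+a)^d \<le> 2^d * a^d" by (simp add: power_mult_distrib)
    hence "(L/2) * a^d \<le> -c1*(1+a)^d" unfolding c1_def using Lneg
      by (simp add: field_simps)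
    with s show ?thesis by linarith
  qed
  define q where "q a = (\<Sum>k\<le>d. f k * a^k) / (1+a)^d" for a :: real
  have cont: "continuous_on {0..R} q" unfolding q_def
    by (intro continuous_intros) auto
  obtain x where x: "x \<in> {0..R}" "\<forall>y\<in>{0..R}. q y \<le> q x"
    using continuous_attains_sup[OF compact_Icc _ cont] R1 by auto
  define c2 where "c2 = - q x"
  have "q x < 0" unfolding q_def using neg x(1)
    by (intro divide_neg_pos) auto
  hence c2: "c2 > 0" unfolding c2_def by simp
  have small: "(\<Sum>k\<le>d. f k * a^k) \<le> -c2*(1+a)^d" if "a \<ge> 0" "a \<le> R" for a
  proof -
    have "q a \<le> -c2" using x that unfolding c2_def by auto
    moreover have "(1+a)^d > 0" using that by simp
    ultimately show ?thesis unfolding q_def by (simp add: field_simps)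
  qed
  show ?thesis
  proof (intro exI[of _ "min c1 c2"] conjI allI impI)
    show "min c1 c2 > 0" using c1 c2 by simp
    fix a :: real assume a: "a \<ge> 0"
    have p: "(1+a)^d \<ge> 0" using a by simp
    have "-c1*(1+a)^d \<le> - min c1 c2 * (1+a)^d" "-c2*(1+a)^d \<le> - min c1 c2 * (1+a)^d"
      using p by (auto intro: mult_right_mono)
    then show "(\<Sum>k\<le>d. f k * a^k) \<le> - min c1 c2 * (1+a)^d"
    proof (cases "a \<ge> R")
      case True
      from big[OF True] have "(\<Sum>k\<le>d. f k * a^k) \<le> -c1*(1+a)^d" .
      with \<open>-c1*(1+a)^d \<le> - min c1 c2 * (1+a)^d\<close> show ?thesis by linarith
    next
      case False
      from small[OF a] False have "(\<Sum>k\<le>d. f k * a^k) \<le> -c2*(1+a)^d" by simp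
      with \<open>-c2*(1+a)^d \<le> - min c1 c2 * (1+a)^d\<close> show ?thesis by linarith
    qed
  qed
qed
lemma common_root_res:
  fixes p :: "real poly"
  assumes "p \<noteq> 0" "poly p a = 0" "poly (pderiv p) a = 0"
  shows "resultant p (pderiv p) = 0"
proof -
  have "[:-a,1:] dvd p" "[:-a,1:] dvd pderiv p" using assms poly_eq_0_iff_dvd by blast+
  hence "[:-a,1:] dvd gcd p (pderiv p)" by simp
  moreover have "gcd p (pderiv p) \<noteq> 0" using assms(1) by simp
  ultimately have "degree [:-a,1:] \<le> degree (gcd p (pderiv p))" by (rule dvd_imp_degree_le)
  hence "degree (gcd p (pderiv p)) \<noteq> 0" by simp
  thus ?thesis using resultant_0_gcd by blast
qed

lemma discr_res: "discriminant p \<noteq> 0 \<Longrightarrow> resultant p (pderiv p) \<noteq> 0"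
  unfolding discriminant_def by auto

lemma exists_pos:
  fixes p :: "real poly"
  assumes p0: "poly p 0 < 0" and a: "a \<ge> 0" "poly p a \<ge> 0" and r: "resultant p (pderiv p) \<noteq> 0"
  shows "\<exists>b\<ge>0. poly p b > 0"
proof (cases "poly p a > 0")
  case True then show ?thesis using a by auto
next
  case False
  hence pa: "poly p a = 0" using a by simp
  have pnz: "p \<noteq> 0" using p0 by auto
  have a0: "a > 0" using a pa p0 by (cases "a = 0") auto
  have d: "poly (pderiv p) a \<noteq> 0" using common_root_res[OF pnz pa] r by blast
  show ?thesis
  proof (cases "poly (pderiv p) a > 0")
    case True
    from DERIV_pos_inc_right[OF poly_DERIV True] obtain e where e: "e > 0"
      "\<forall>h>0. h < e \<longrightarrow> poly p a < poly p (a + h)" by blast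
    hence "poly p (a + e/2) > 0" using pa by auto
    thus ?thesis using a e by (intro exI[of _ "a + e/2"]) auto
  next
    case False
    hence neg: "poly (pderiv p) a < 0" using d by simp
    from DERIV_neg_dec_left[OF poly_DERIV neg] obtain e where e: "e > 0"
      "\<forall>h>0. h < e \<longrightarrow> poly p a < poly p (a - h)" by blast
    define h where "h = min e a / 2"
    have h: "h > 0" "h < e" "h < a" unfolding h_def using e a0 by auto
    hence "poly p (a - h) > 0" using pa e by auto
    thus ?thesis using h by (intro exI[of _ "a - h"]) auto
  qed
qed
lemma coeff_ppoly: "coeff (ppoly d \<theta>) k = (if k \<le> d then \<theta> (k, d - k) else 0)"
  unfolding ppoly_def by (auto simp: coeff_sum coeff_monom)

lemma poly_ppoly0: "poly (ppoly d \<theta>) 0 = \<theta> (0, d)"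
  by (simp add: poly_0_coeff_0 coeff_ppoly)

lemma topspace_T: "topspace (param_top d) = param_space d"
  by (simp add: param_top_def param_space_def)

lemma idx_k: "1 \<le> d \<Longrightarrow> k \<le> d \<Longrightarrow> (k, d - k) \<in> idx d"
  unfolding idx_def by auto

lemma cont_coord: "i \<in> idx d \<Longrightarrow> continuous_map (param_top d) euclideanreal (\<lambda>\<theta>. \<theta> i)"
  unfolding param_top_def by (rule continuous_map_product_projection)

lemma cont_poly: "1 \<le> d \<Longrightarrow> continuous_map (param_top d) euclideanreal (\<lambda>\<theta>. poly (ppoly d \<theta>) a)"
  unfolding poly_ppoly
  by (intro continuous_map_sum continuous_map_real_mult continuous_map_const[THEN iffD2] cont_coord idx_k) auto

lemma cont_dist: "1 \<le> d \<Longrightarrow> continuous_map (param_top d) euclideanreal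
   (\<lambda>\<theta>'. (\<Sum>k\<le>d. \<bar>\<theta>' (k, d-k) - \<theta> (k, d-k)\<bar>))"
  by (intro continuous_map_sum continuous_map_real_mult continuous_map_diff continuous_map_real_abs
      continuous_map_const[THEN iffD2] cont_coord idx_k) auto

lemma Theta2_sub: "Theta2 d \<subseteq> param_space d"
  unfolding Theta2_def by auto

lemma topspace_X: "topspace (subtopology (param_top d) (Theta2 d)) = Theta2 d"
  using Theta2_sub by (auto simp: topspace_T)

lemma openB:
  assumes d: "1 \<le> d"
  shows "openin (subtopology (param_top d) (Theta2 d)) (Theta2 d - Theta1 d)"
proof (subst openin_subopen, intro ballI)
  let ?X = "subtopology (param_top d) (Theta2 d)"
  fix \<theta> assume th: "\<theta> \<in> Theta2 d - Theta1 d"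
  hence th2: "\<theta> \<in> param_space d" "\<theta> (d,0) < 0" "\<theta> (0,d) < 0" "discriminant (ppoly d \<theta>) \<noteq> 0"
    unfolding Theta2_def by auto
  with th obtain a where a: "a \<ge> 0" "poly (ppoly d \<theta>) a \<ge> 0"
    unfolding Theta1_def by force
  obtain b where b: "b \<ge> 0" "poly (ppoly d \<theta>) b > 0"
    using exists_pos[OF _ a discr_res[OF th2(4)]] th2(3) poly_ppoly0 by auto
  let ?T = "{\<theta>' \<in> topspace ?X. poly (ppoly d \<theta>') b \<in> {0<..}}"
  have "openin ?X ?T"
    by (intro openin_continuous_map_preimage[OF continuous_map_from_subtopology[OF cont_poly[OF d]]]) auto
  moreover have "\<theta> \<in> ?T" using th b Theta2_sub by (auto simp: topspace_T)
  moreover have "?T \<subseteq> Theta2 d - Theta1 d"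
    using b(1) by (auto simp: topspace_X Theta1_def)
  ultimately show "\<exists>T. openin ?X T \<and> \<theta> \<in> T \<and> T \<subseteq> Theta2 d - Theta1 d" by blast
qed

lemma openA:
  assumes d: "1 \<le> d"
  shows "openin (subtopology (param_top d) (Theta2 d)) (Theta2 d \<inter> Theta1 d)"
proof (subst openin_subopen, intro ballI)
  let ?X = "subtopology (param_top d) (Theta2 d)"
  fix \<theta> assume th: "\<theta> \<in> Theta2 d \<inter> Theta1 d"
  hence neg: "\<forall>a\<ge>0. (\<Sum>k\<le>d. \<theta> (k, d-k) * a^k) < 0" and l: "\<theta> (d, d - d) < 0"
    unfolding Theta1_def poly_ppoly by auto
  obtain c where c: "c > 0" "\<forall>a\<ge>0. (\<Sum>k\<le>d. \<theta> (k, d-k) * a^k) \<le> -c*(1+a)^d"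
    using neg_bound[where f = "\<lambda>k. \<theta> (k, d-k)", OF l neg] by blast
  let ?T = "{\<theta>' \<in> topspace ?X. (\<Sum>k\<le>d. \<bar>\<theta>' (k, d-k) - \<theta> (k, d-k)\<bar>) \<in> {..<c}}"
  have "openin ?X ?T"
    by (intro openin_continuous_map_preimage[OF continuous_map_from_subtopology[OF cont_dist[OF d]]]) auto
  moreover have "\<theta> \<in> ?T" using th c Theta2_sub by (auto simp: topspace_T)
  moreover have "?T \<subseteq> Theta2 d \<inter> Theta1 d"
  proof
    fix \<theta>' assume t: "\<theta>' \<in> ?T"
    hence t2: "\<theta>' \<in> Theta2 d" and g: "(\<Sum>k\<le>d. \<bar>\<theta>' (k, d-k) - \<theta> (k, d-k)\<bar>) < c"
      by (auto simp: topspace_X)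
    have "poly (ppoly d \<theta>') a < 0" if a: "a \<ge> 0" for a
    proof -
      have pos: "(1+a)^d > 0" using a by simp
      have "(\<Sum>k\<le>d. \<theta>' (k, d-k) * a^k) = (\<Sum>k\<le>d. \<theta> (k, d-k) * a^k)
            + (\<Sum>k\<le>d. (\<theta>' (k, d-k) - \<theta> (k, d-k)) * a^k)"
        by (simp add: sum.distrib[symmetric] algebra_simps)
      also have "(\<Sum>k\<le>d. (\<theta>' (k, d-k) - \<theta> (k, d-k)) * a^k)
            \<le> (\<Sum>k\<le>d. \<bar>\<theta>' (k, d-k) - \<theta> (k, d-k)\<bar> * (1+a)^d)"
      proof (intro sum_mono)
        fix k assume k: "k \<in> {..d}"
        have "a^k \<le> (1+a)^k" using a by (intro power_mono) auto
        also have "\<dots> \<le> (1+a)^d" using a k by (intro power_increasing) auto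
        finally have ak: "a^k \<le> (1+a)^d" .
        have "(\<theta>' (k, d-k) - \<theta> (k, d-k)) * a^k \<le> \<bar>\<theta>' (k, d-k) - \<theta> (k, d-k)\<bar> * a^k"
          using a by (intro mult_right_mono) auto
        also have "\<dots> \<le> \<bar>\<theta>' (k, d-k) - \<theta> (k, d-k)\<bar> * (1+a)^d"
          using ak by (intro mult_left_mono) auto
        finally show "(\<theta>' (k, d-k) - \<theta> (k, d-k)) * a^k \<le> \<bar>\<theta>' (k, d-k) - \<theta> (k, d-k)\<bar> * (1+a)^d" .
      qed
      also have "\<dots> = (\<Sum>k\<le>d. \<bar>\<theta>' (k, d-k) - \<theta> (k, d-k)\<bar>) * (1+a)^d"
        by (simp add: sum_distrib_right)
      also have "\<dots> < c * (1+a)^d" using g pos by simp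
      finally have "(\<Sum>k\<le>d. \<theta>' (k, d-k) * a^k) < (\<Sum>k\<le>d. \<theta> (k, d-k) * a^k) + c * (1+a)^d"
        by simp
      also have "\<dots> \<le> 0" using c(2) a by force
      finally show ?thesis unfolding poly_ppoly .
    qed
    with t2 show "\<theta>' \<in> Theta2 d \<inter> Theta1 d" unfolding Theta1_def Theta2_def by auto
  qed
  ultimately show "\<exists>T. openin ?X T \<and> \<theta> \<in> T \<and> T \<subseteq> Theta2 d \<inter> Theta1 d" by blast
qed
lemma meas_coeff:
  assumes d: "1 \<le> d"
  shows "(\<lambda>\<theta>. coeff (ppoly d \<theta>) k) \<in> borel_measurable (param_lebesgue d)"
proof (cases "k \<le> d")
  case True
  have "(\<lambda>\<theta>. \<theta> (k, d-k)) \<in> measurable (param_lebesgue d) lborel"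
    unfolding param_lebesgue_def by (rule measurable_component_singleton[OF idx_k[OF d True]])
  hence "(\<lambda>\<theta>. \<theta> (k, d-k)) \<in> borel_measurable (param_lebesgue d)"
    by simp
  then show ?thesis using True by (simp add: coeff_ppoly)
qed (simp add: coeff_ppoly)

lemma meas_det:
  fixes P Q :: "'b \<Rightarrow> real poly"
  assumes P: "\<And>k. (\<lambda>\<theta>. coeff (P \<theta>) k) \<in> borel_measurable M"
    and Q: "\<And>k. (\<lambda>\<theta>. coeff (Q \<theta>) k) \<in> borel_measurable M"
  shows "(\<lambda>\<theta>. det (sylvester_mat_sub m n (P \<theta>) (Q \<theta>))) \<in> borel_measurable M"
proof -
  define E where "E i j \<theta> = (if i < n then if i \<le> j \<and> j - i \<le> m then coeff (P \<theta>) (m + i - j) else 0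
     else if i - n \<le> j \<and> j \<le> i then coeff (Q \<theta>) (i-j) else 0)" for i j \<theta>
  have E: "(\<lambda>\<theta>. E i j \<theta>) \<in> borel_measurable M" for i j
    unfolding E_def using P Q by auto
  have eq: "det (sylvester_mat_sub m n (P \<theta>) (Q \<theta>)) =
     (\<Sum> p \<in> {p. p permutes {0 ..< m+n}}. of_int (sign p) * (\<Prod> i = 0 ..< m+n. E i (p i) \<theta>))" for \<theta>
    unfolding det_def
  proof (simp, intro sum.cong refl arg_cong2[where f="(*)"] prod.cong)
    fix p i assume "p \<in> {p. p permutes {0..<m+n}}" "i \<in> {0..<m+n}"
    hence "p i < m + n" by (auto dest: permutes_in_image)
    thus "sylvester_mat_sub m n (P \<theta>) (Q \<theta>) $$ (i, p i) = E i (p i) \<theta>"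
      using \<open>i \<in> {0..<m+n}\<close> unfolding sylvester_mat_sub_def E_def by simp
  qed
  show ?thesis unfolding eq
    by (intro borel_measurable_sum borel_measurable_times borel_measurable_const borel_measurable_prod E)
qed
definition Zs :: "nat \<Rightarrow> ((nat \<times> nat) \<Rightarrow> real) set" where
  "Zs d = {\<theta> \<in> space (param_lebesgue d). \<theta> (d,0) \<noteq> 0 \<and>
      det (sylvester_mat_sub d (d-1) (ppoly d \<theta>) (pderiv (ppoly d \<theta>))) = 0}"

lemma Zs_sets:
  assumes d: "1 \<le> d"
  shows "Zs d \<in> sets (param_lebesgue d)"
proof -
  have m1[measurable]: "(\<lambda>\<theta>. \<theta> (d,0)) \<in> borel_measurable (param_lebesgue d)"
    using meas_coeff[OF d, of d] by (simp add: coeff_ppoly)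
  have m2[measurable]: "(\<lambda>\<theta>. det (sylvester_mat_sub d (d-1) (ppoly d \<theta>) (pderiv (ppoly d \<theta>))))
     \<in> borel_measurable (param_lebesgue d)"
    by (intro meas_det meas_coeff[OF d]) (simp add: coeff_pderiv borel_measurable_times meas_coeff[OF d])
  show ?thesis unfolding Zs_def by measurable
qed

lemma degree_ppoly: "\<theta> (d,0) \<noteq> 0 \<Longrightarrow> degree (ppoly d \<theta>) = d"
  by (intro antisym degree_le le_degree) (auto simp: coeff_ppoly)
lemma map_of_real_mult:
  "map_poly (of_real::real\<Rightarrow>complex) (p * q) = map_poly of_real p * map_poly of_real q"
  by (induct p, auto simp: hom_distribs)

lemma root_param:
  fixes q :: "real poly" and c :: real
  assumes dq: "degree q = d" and d: "1 \<le> d" and r: "resultant (q + [:c:]) (pderiv (q + [:c:])) = 0"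
  shows "c \<in> (\<lambda>z. Re (- poly (map_poly of_real q) z)) ` {z. poly (map_poly of_real (pderiv q)) z = 0}"
proof -
  define p where "p = q + [:c:]"
  have pd: "pderiv p = pderiv q" unfolding p_def by (simp add: pderiv_add pderiv_pCons)
  define g where "g = gcd p (pderiv p)"
  have "degree g \<noteq> 0" using r resultant_0_gcd unfolding g_def p_def by blast
  hence "\<not> constant (poly (map_poly (of_real :: real \<Rightarrow> complex) g))"
    by (simp add: constant_degree)
  then obtain z :: complex where z: "poly (map_poly of_real g) z = 0"
    using fundamental_theorem_of_algebra by blast
  have "g dvd p" unfolding g_def by simp
  then obtain h where "p = g * h" by (elim dvdE)
  hence "map_poly (of_real :: real \<Rightarrow> complex) p = map_poly of_real g * map_poly of_real h"
    by (simp add: map_of_real_mult)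
  hence zp: "poly (map_poly of_real p) z = 0" using z by simp
  have "g dvd pderiv p" unfolding g_def by simp
  then obtain h' where "pderiv p = g * h'" by (elim dvdE)
  hence "map_poly (of_real :: real \<Rightarrow> complex) (pderiv p) = map_poly of_real g * map_poly of_real h'"
    by (simp add: map_of_real_mult)
  hence zq: "poly (map_poly of_real (pderiv q)) z = 0" using z pd by simp
  have "map_poly (of_real :: real \<Rightarrow> complex) p = map_poly of_real q + [:of_real c:]"
    unfolding p_def by (simp add: hom_distribs)
  hence "poly (map_poly of_real q) z + of_real c = 0" using zp by simp
  hence "c = Re (- poly (map_poly of_real q) z)"
    by (metis Re_complex_of_real add.commute add_eq_0_iff)
  thus ?thesis using zq by blast
qed
lemma finite_idx: "finite (idx d)"
proof -
  have "idx d \<subseteq> {..d} \<times> {..d}" unfolding idx_def by auto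
  thus ?thesis by (rule finite_subset) auto
qed

lemma Zs_null:
  assumes d: "1 \<le> d"
  shows "Zs d \<in> null_sets (param_lebesgue d)"
proof -
  interpret product_sigma_finite "\<lambda>_::nat\<times>nat. lborel::real measure" by standard
  define J where "J = {(0::nat, d)}"
  define I where "I = idx d - J"
  have IJ: "I \<union> J = idx d" "I \<inter> J = {}" "finite I" "finite J"
    unfolding I_def J_def using d finite_idx[of d] by (auto simp: idx_def)
  have Zm: "Zs d \<in> sets (Pi\<^sub>M (I \<union> J) (\<lambda>_. lborel))"
    using Zs_sets[OF d] IJ(1) by (simp add: param_lebesgue_def)
  have slice: "emeasure (Pi\<^sub>M J (\<lambda>_. lborel)) ((\<lambda>y. merge I J (x, y)) -` Zs d \<inter> space (Pi\<^sub>M J (\<lambda>_. lborel))) = 0"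
    if x: "x \<in> space (Pi\<^sub>M I (\<lambda>_. lborel))" for x
  proof -
    let ?S = "(\<lambda>y. merge I J (x, y)) -` Zs d \<inter> space (Pi\<^sub>M J (\<lambda>_. lborel))"
    define x0 where "x0 = (\<lambda>i. if i \<in> I then x i else if i = (0,d) then 0 else undefined)"
    define q where "q = ppoly d x0"
    define F where "F = (\<lambda>z. Re (- poly (map_poly of_real q) z)) ` {z. poly (map_poly (of_real :: real \<Rightarrow> complex) (pderiv q)) z = 0}"
    have dI: "(d,0) \<in> I" unfolding I_def J_def using d by (auto simp: idx_def)
    show ?thesis
    proof (cases "x (d,0) = 0")
      case True
      have "?S = {}" using True dI by (auto simp: Zs_def merge_def)
      thus ?thesis by simp
    next
      case False
      have x0d: "x0 (d,0) \<noteq> 0" using False dI by (simp add: x0_def)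
      have dq: "degree q = d" unfolding q_def using degree_ppoly[of x0 d, OF x0d] by simp
      have "pderiv q \<noteq> 0" using dq d by (simp add: pderiv_eq_0_iff)
      hence "map_poly (of_real :: real \<Rightarrow> complex) (pderiv q) \<noteq> 0" by simp
      hence finF: "finite F" unfolding F_def by (intro finite_imageI poly_roots_finite)
      have sub: "?S \<subseteq> Pi\<^sub>E J (\<lambda>_. F)"
      proof
        fix y assume y: "y \<in> ?S"
        define \<theta> where "\<theta> = merge I J (x, y)"
        have yJ: "y \<in> Pi\<^sub>E J (\<lambda>_. UNIV)" using y by (simp add: space_PiM)
        have thZ: "\<theta> \<in> Zs d" using y unfolding \<theta>_def by simp
        have th_eq: "ppoly d \<theta> = q + [:y (0,d):]"
        proof (rule poly_eqI)
          fix k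
          show "coeff (ppoly d \<theta>) k = coeff (q + [:y (0,d):]) k"
          proof (cases "k \<le> d")
            case True
            show ?thesis
            proof (cases k)
              case 0 thus ?thesis using True unfolding q_def \<theta>_def
                by (simp add: coeff_ppoly merge_def x0_def I_def J_def)
            next
              case (Suc m)
              have "(k, d-k) \<in> I" unfolding I_def J_def using True Suc d by (auto simp: idx_def)
              thus ?thesis using True Suc unfolding q_def \<theta>_def
                by (simp add: coeff_ppoly merge_def x0_def)
            qed
          next
            case False thus ?thesis using d unfolding q_def by (simp add: coeff_ppoly coeff_pCons split: nat.split)
          qed
        qed
        have th_d: "\<theta> (d,0) \<noteq> 0" using thZ by (simp add: Zs_def)
        have dth: "degree (ppoly d \<theta>) = d" using degree_ppoly[of \<theta> d, OF th_d] .
        have "det (sylvester_mat_sub d (d-1) (ppoly d \<theta>) (pderiv (ppoly d \<theta>))) = 0"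
          using thZ by (simp add: Zs_def)
        hence "resultant (ppoly d \<theta>) (pderiv (ppoly d \<theta>)) = 0"
          unfolding resultant_def sylvester_mat_def using dth by (simp add: degree_pderiv)
        hence "y (0,d) \<in> F" unfolding F_def th_eq by (rule root_param[OF dq d])
        thus "y \<in> Pi\<^sub>E J (\<lambda>_. F)" using yJ unfolding J_def by auto
      qed
      have Fn: "F \<in> null_sets lborel" using finF by (rule finite_imp_null_set_lborel)
      have "emeasure (Pi\<^sub>M J (\<lambda>_. lborel)) ?S \<le> emeasure (Pi\<^sub>M J (\<lambda>_. lborel)) (Pi\<^sub>E J (\<lambda>_. F))"
        using sub Fn IJ(4) by (intro emeasure_mono sets_PiM_I_finite) auto
      also have "\<dots> = (\<Prod>i\<in>J. emeasure lborel F)"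
        using Fn IJ(4) by (intro emeasure_PiM) auto
      also have "\<dots> = 0" using Fn unfolding J_def by (simp add: null_setsD1)
      finally show ?thesis by simp
    qed
  qed
  have "emeasure (Pi\<^sub>M (I \<union> J) (\<lambda>_. lborel)) (Zs d) =
     (\<integral>\<^sup>+x. emeasure (Pi\<^sub>M J (\<lambda>_. lborel)) ((\<lambda>y. merge I J (x, y)) -` Zs d \<inter> space (Pi\<^sub>M J (\<lambda>_. lborel))) \<partial>Pi\<^sub>M I (\<lambda>_. lborel))"
    using IJ(2,3,4) Zm by (rule emeasure_fold_integral)
  also have "\<dots> = (\<integral>\<^sup>+x. 0 \<partial>Pi\<^sub>M I (\<lambda>_. lborel))"
    using slice by (simp add: nn_integral_cong_simp)
  finally have "emeasure (param_lebesgue d) (Zs d) = 0" using IJ(1) by (simp add: param_lebesgue_def)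
  thus ?thesis using Zs_sets[OF d] by (intro null_setsI)
qed
lemma space_pl: "space (param_lebesgue d) = param_space d"
  by (simp add: param_lebesgue_def param_space_def space_PiM)

theorem theorem6p3:
  fixes d :: nat
  assumes "d \<ge> 2"
  defines "Istar \<equiv> {C \<in> connected_components_of (subtopology (param_top d) (Theta2 d)).
                      C \<inter> Theta1 d \<noteq> {}}"
  shows "\<exists>Z \<in> null_sets (param_lebesgue d).
           (Theta1 d - \<Union>Istar) \<union> (\<Union>Istar - Theta1 d) \<subseteq> Z"
proof -
  have d: "1 \<le> d" using assms(1) by simp
  let ?X = "subtopology (param_top d) (Theta2 d)"
  have op: "openin ?X (Theta2 d \<inter> Theta1 d)" by (rule openA[OF d])
  have cl: "closedin ?X (Theta2 d \<inter> Theta1 d)"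
  proof -
    have "Theta2 d - Theta2 d \<inter> Theta1 d = Theta2 d - Theta1 d" by blast
    thus ?thesis unfolding closedin_def topspace_X using openB[OF d] by simp
  qed
  have U1: "\<Union>Istar \<subseteq> Theta1 d"
  proof
    fix \<theta> assume "\<theta> \<in> \<Union>Istar"
    then obtain C where C: "C \<in> connected_components_of ?X" "C \<inter> Theta1 d \<noteq> {}" "\<theta> \<in> C"
      unfolding Istar_def by blast
    have cC: "connectedin ?X C" using C(1) by (rule connectedin_connected_components_of)
    have "C \<subseteq> topspace ?X" using cC by (rule connectedin_subset_topspace)
    hence CT: "C \<subseteq> Theta2 d" by (simp add: topspace_X)
    from connectedin_clopen_cases[OF cC cl op] have "C \<subseteq> Theta2 d \<inter> Theta1 d \<or> disjnt C (Theta2 d \<inter> Theta1 d)" .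
    moreover have "\<not> disjnt C (Theta2 d \<inter> Theta1 d)" using C(2) CT unfolding disjnt_def by blast
    ultimately show "\<theta> \<in> Theta1 d" using C(3) by blast
  qed
  have U2: "Theta1 d - \<Union>Istar \<subseteq> Zs d"
  proof
    fix \<theta> assume th: "\<theta> \<in> Theta1 d - \<Union>Istar"
    have n2: "\<theta> \<notin> Theta2 d"
    proof
      assume t2: "\<theta> \<in> Theta2 d"
      hence "\<theta> \<in> \<Union>(connected_components_of ?X)"
        using Theta2_sub by (auto simp: Union_connected_components_of topspace_T)
      then obtain C where "C \<in> connected_components_of ?X" "\<theta> \<in> C" by blast
      hence "C \<in> Istar" using th unfolding Istar_def by blast
      thus False using th \<open>\<theta> \<in> C\<close> by blast
    qed
    have t1: "\<theta> \<in> param_space d" "\<theta> (d,0) < 0" "\<theta> (0,d) < 0" using th unfolding Theta1_def by auto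
    hence D: "discriminant (ppoly d \<theta>) = 0" using n2 unfolding Theta2_def by auto
    have dth: "degree (ppoly d \<theta>) = d" using t1(2) degree_ppoly[of \<theta> d] by simp
    have lc: "lead_coeff (ppoly d \<theta>) \<noteq> 0" using dth t1(2) by (simp add: coeff_ppoly)
    have "resultant (ppoly d \<theta>) (pderiv (ppoly d \<theta>)) = 0"
      using D lc unfolding discriminant_def by simp
    hence "det (sylvester_mat_sub d (d-1) (ppoly d \<theta>) (pderiv (ppoly d \<theta>))) = 0"
      unfolding resultant_def sylvester_mat_def using dth by (simp add: degree_pderiv)
    thus "\<theta> \<in> Zs d" unfolding Zs_def space_pl using t1 by simp
  qed
  show ?thesis
    using Zs_null[OF d] U1 U2 by (intro bexI[of _ "Zs d"]) auto
qed
end
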